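(* Let $H$ be an undirected graph with $n$ vertices and let $G_{\mathrm{sub}}$ be a graph obtained from $H$ by subdividing each edge at most once. Then $\mathrm{dtw}(G_{\mathrm{sub}})\le\lceil n/2\rceil$, i.e., every acyclic orientation of $G_{\mathrm{sub}}$ has DAG treewidth at most $\lceil n/2\rceil$.
   Context: Subdividing an edge $\{u,v\}$ replaces it by a new vertex $w$ and edges $\{u,w\},\{w,v\}$. For a DAG $\vec H$, a source is a vertex of in-degree $0$; $S$ denotes the set of sources; $R(s)$ is the set of vertices reachable from $s$, and $R(B)=\bigcup_{s\in B}R(s)$. A DAG tree decomposition of $\vec H$ is a tree $T$ whose nodes (bags) are subsets of $S$ such that every source lies in some bag and, for any bags $B,B_1,B_2$ with $B$ on the path between $B_1$ and $B_2$ in $T$, $R(B_1)\cap R(B_2)\subseteq R(B)$; its width is the maximum bag size and $\mathrm{dtw}(\vec H)$ is the minimum width. For an undirected graph, $\mathrm{dtw}$ is the maximum of $\mathrm{dtw}(\vec H)$ over all its acyclic orientations $\vec H$. *)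

theory Defs
  imports Complex_Main
begin

definition simple_graph :: "'a set \<Rightarrow> 'a set set \<Rightarrow> bool" where
  "simple_graph V E \<longleftrightarrow> finite V \<and>
     (\<forall>e\<in>E. \<exists>u v. u \<in> V \<and> v \<in> V \<and> u \<noteq> v \<and> e = {u, v})"

text \<open>Subdividing exactly the edges in F (a subset of E) once each; the new vertex
  on edge e is Inr e, original vertices are Inl v.\<close>
definition subdivide ::
  "'a set \<Rightarrow> 'a set set \<Rightarrow> 'a set set \<Rightarrow> ('a + 'a set) set \<times> ('a + 'a set) set set" where
  "subdivide V E F =
     (Inl ` V \<union> Inr ` F,
      {{Inl u, Inl v} | u v. {u, v} \<in> E - F} \<union> {{Inl u, Inr e} | u e. e \<in> F \<and> u \<in> e})"

definition acyclic_orientation :: "'v set \<Rightarrow> 'v set set \<Rightarrow> ('v \<times> 'v) set \<Rightarrow> bool" where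
  "acyclic_orientation V E A \<longleftrightarrow> A \<subseteq> V \<times> V \<and>
     (\<forall>u v. (u, v) \<in> A \<longrightarrow> {u, v} \<in> E) \<and>
     (\<forall>u v. {u, v} \<in> E \<longrightarrow> (u, v) \<in> A \<or> (v, u) \<in> A) \<and>
     acyclic A"

definition sources :: "'v set \<Rightarrow> ('v \<times> 'v) set \<Rightarrow> 'v set" where
  "sources V A = {v \<in> V. \<not> (\<exists>u. (u, v) \<in> A)}"

definition reach :: "('v \<times> 'v) set \<Rightarrow> 'v \<Rightarrow> 'v set" where
  "reach A s = {v. (s, v) \<in> A\<^sup>*}"

definition reachB :: "('v \<times> 'v) set \<Rightarrow> 'v set \<Rightarrow> 'v set" where
  "reachB A B = (\<Union>s\<in>B. reach A s)"

definition tpath :: "nat set set \<Rightarrow> nat list \<Rightarrow> nat \<Rightarrow> nat \<Rightarrow> bool" where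
  "tpath TE p a b \<longleftrightarrow> p \<noteq> [] \<and> hd p = a \<and> last p = b \<and> distinct p \<and>
     (\<forall>i < length p - 1. {p ! i, p ! Suc i} \<in> TE)"

definition is_tree :: "nat set \<Rightarrow> nat set set \<Rightarrow> bool" where
  "is_tree N TE \<longleftrightarrow> finite N \<and> N \<noteq> {} \<and>
     (\<forall>e\<in>TE. \<exists>a b. a \<in> N \<and> b \<in> N \<and> a \<noteq> b \<and> e = {a, b}) \<and>
     (\<forall>a\<in>N. \<forall>b\<in>N. \<exists>!p. tpath TE p a b)"

definition on_path :: "nat set set \<Rightarrow> nat \<Rightarrow> nat \<Rightarrow> nat \<Rightarrow> bool" where
  "on_path TE t a b \<longleftrightarrow> (\<exists>p. tpath TE p a b \<and> t \<in> set p)"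

definition dag_tree_decomp ::
  "'v set \<Rightarrow> ('v \<times> 'v) set \<Rightarrow> nat set \<Rightarrow> nat set set \<Rightarrow> (nat \<Rightarrow> 'v set) \<Rightarrow> bool" where
  "dag_tree_decomp V A N TE bag \<longleftrightarrow> is_tree N TE \<and>
     (\<forall>t\<in>N. bag t \<subseteq> sources V A) \<and>
     (\<forall>s\<in>sources V A. \<exists>t\<in>N. s \<in> bag t) \<and>
     (\<forall>t\<in>N. \<forall>t1\<in>N. \<forall>t2\<in>N. on_path TE t t1 t2 \<longrightarrow>
        reachB A (bag t1) \<inter> reachB A (bag t2) \<subseteq> reachB A (bag t))"

definition td_width :: "nat set \<Rightarrow> (nat \<Rightarrow> 'v set) \<Rightarrow> nat" where
  "td_width N bag = Max ((\<lambda>t. card (bag t)) ` N)"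

definition dtw_dag :: "'v set \<Rightarrow> ('v \<times> 'v) set \<Rightarrow> nat" where
  "dtw_dag V A = Inf {td_width N bag | N TE bag. dag_tree_decomp V A N TE bag}"

definition dtw_graph :: "'v set \<Rightarrow> 'v set set \<Rightarrow> nat" where
  "dtw_graph V E = Sup {dtw_dag V A | A. acyclic_orientation V E A}"

end

theory Submission
  imports Defs
begin


fun chain :: "nat set set \<Rightarrow> nat list \<Rightarrow> bool" where
  "chain TE (x # y # r) = ({x, y} \<in> TE \<and> chain TE (y # r))"
| "chain TE _ = True"

lemma chain_nth: "(\<forall>i < length p - 1. {p ! i, p ! Suc i} \<in> TE) \<longleftrightarrow> chain TE p"
proof (induction TE p rule: chain.induct)
  case (1 TE x y r)
  have "(\<forall>i < length (x # y # r) - 1. {(x # y # r) ! i, (x # y # r) ! Suc i} \<in> TE) \<longleftrightarrow>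
        {x, y} \<in> TE \<and> (\<forall>i < length (y # r) - 1. {(y # r) ! i, (y # r) ! Suc i} \<in> TE)"
    by (auto simp: less_Suc_eq_0_disj)
  then show ?case using 1 by simp
qed auto

lemma tpath_chain: "tpath TE p a b \<longleftrightarrow> p \<noteq> [] \<and> hd p = a \<and> last p = b \<and> distinct p \<and> chain TE p"
  unfolding tpath_def chain_nth ..

lemma chain_append: "chain TE (xs @ [y, z]) \<longleftrightarrow> chain TE (xs @ [y]) \<and> {y, z} \<in> TE"
  by (induction xs rule: induct_list012) auto

lemma chain_rev: "chain TE p \<Longrightarrow> chain TE (rev p)"
proof (induction TE p rule: chain.induct)
  case (1 TE x y r)
  then show ?case using chain_append[of TE "rev r" y x] by (simp add: insert_commute)
qed auto

lemma tpath_rev: "tpath TE p a b \<Longrightarrow> tpath TE (rev p) b a"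
  by (auto simp: tpath_chain chain_rev hd_rev last_rev)

lemma chain_mono: "chain TE p \<Longrightarrow> TE \<subseteq> TE' \<Longrightarrow> chain TE' p"
  by (induction TE p rule: chain.induct) auto

lemma chain_avoid: "chain (insert {m, a} TE) p \<Longrightarrow> m \<notin> set p \<Longrightarrow> chain TE p"
  by (induction "insert {m, a} TE" p rule: chain.induct) (auto simp: doubleton_eq_iff)

lemma on_path_sym: "on_path TE t a b \<Longrightarrow> on_path TE t b a"
  unfolding on_path_def using tpath_rev by fastforce

lemma chain_Union0: "chain TE (x # y # r) \<Longrightarrow> set (x # y # r) \<subseteq> \<Union>TE"
proof (induction r arbitrary: x y)
  case Nil then show ?case by auto
next
  case (Cons z r)
  then have "set (y # z # r) \<subseteq> \<Union>TE" using Cons.IH[of y z] by simp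
  moreover have "{x, y} \<in> TE" using Cons.prems by simp
  ultimately show ?case by auto
qed

lemma chain_Union: "chain TE p \<Longrightarrow> 2 \<le> length p \<Longrightarrow> set p \<subseteq> \<Union>TE"
  using chain_Union0[of TE "hd p" "hd (tl p)" "tl (tl p)"]
  by (cases p; cases "tl p") auto

lemma tree_Union: "is_tree N TE \<Longrightarrow> \<Union>TE \<subseteq> N"
proof
  fix x assume t: "is_tree N TE" and "x \<in> \<Union>TE"
  then obtain e where "e \<in> TE" "x \<in> e" by blast
  moreover have "\<forall>e\<in>TE. \<exists>a b. a \<in> N \<and> b \<in> N \<and> a \<noteq> b \<and> e = {a, b}" using t unfolding is_tree_def by simp
  ultimately show "x \<in> N" by fastforce
qed

lemma tpath_set: "is_tree N TE \<Longrightarrow> tpath TE p a b \<Longrightarrow> a \<in> N \<Longrightarrow> set p \<subseteq> N"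
proof -
  assume t: "is_tree N TE" and p: "tpath TE p a b" and a: "a \<in> N"
  show ?thesis
  proof (cases "2 \<le> length p")
    case True then show ?thesis using chain_Union[of TE p] tree_Union[OF t] p
      by (auto simp: tpath_chain)
  next
    case False
    then obtain x where "p = [x]" using p by (cases p; cases "tl p"; auto simp: tpath_chain)
    then show ?thesis using p a by (auto simp: tpath_chain)
  qed
qed

lemma leaf_end:
  assumes "chain (insert {m, a} TE) p" "distinct p" "m \<in> set p" "m \<notin> \<Union>TE" "m \<noteq> a"
  shows "m = hd p \<or> m = last p"
  using assms
proof (induction p)
  case Nil then show ?case by simp
next
  case (Cons x p')
  show ?case
  proof (cases "m = x")
    case True then show ?thesis by simp
  next
    case False
    then obtain y r where yr: "p' = y # r" using Cons.prems by (cases p') auto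
    have ch: "chain (insert {m, a} TE) p'" using Cons.prems yr by simp
    have "m = hd p' \<or> m = last p'" using Cons.IH[OF ch] Cons.prems False by simp
    then show ?thesis
    proof
      assume my: "m = hd p'"
      show ?thesis
      proof (cases "r = []")
        case True then show ?thesis using my yr by simp
      next
        case False
        then obtain z r' where Cons2: "r = z # r'" by (cases r) auto
        have "{x, m} \<in> insert {m, a} TE" using Cons.prems my yr by simp
        then have "x = a" using Cons.prems(4) False by (auto simp: doubleton_eq_iff)
        have "{m, z} \<in> insert {m, a} TE" using Cons.prems my yr Cons2 by simp
        then have "z = a" using Cons.prems(4) Cons.prems(2) yr Cons2 my by (auto simp: doubleton_eq_iff)
        then show ?thesis using Cons.prems(2) yr Cons2 \<open>x = a\<close> by simp
      qed
    qed (use yr in simp)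
  qed
qed
lemma leaf_start:
  assumes "chain (insert {m, a} TE) (m # z # r)" "m \<notin> \<Union>TE"
  shows "z = a"
  using assms by (auto simp: doubleton_eq_iff)

lemma tpath_old:
  assumes "tpath (insert {m, a} TE) p x y" "m \<notin> \<Union>TE" "m \<noteq> a" "x \<noteq> m" "y \<noteq> m"
  shows "tpath TE p x y"
proof -
  have "m \<notin> set p" using leaf_end[of m a TE p] assms by (auto simp: tpath_chain)
  then show ?thesis using assms chain_avoid by (auto simp: tpath_chain)
qed

lemma tpath_new_start:
  assumes "m \<notin> \<Union>TE" "m \<noteq> a" "y \<noteq> m"
  shows "tpath (insert {m, a} TE) p m y \<longleftrightarrow> (\<exists>p'. p = m # p' \<and> tpath TE p' a y \<and> m \<notin> set p')"
proof
  assume p: "tpath (insert {m, a} TE) p m y"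
  then obtain p' where pp: "p = m # p'" by (cases p) (auto simp: tpath_chain)
  then have "p' \<noteq> []" using p assms by (auto simp: tpath_chain)
  then obtain z r where zr: "p' = z # r" by (cases p') auto
  have "z = a" using leaf_start[of m a TE z r] p pp zr assms by (auto simp: tpath_chain)
  have "m \<notin> set p'" using p pp by (auto simp: tpath_chain)
  moreover have "chain (insert {m, a} TE) p'" using p pp zr by (auto simp: tpath_chain)
  ultimately have "tpath TE p' a y" using chain_avoid p pp zr \<open>z = a\<close> by (auto simp: tpath_chain)
  then show "\<exists>p'. p = m # p' \<and> tpath TE p' a y \<and> m \<notin> set p'" using pp \<open>m \<notin> set p'\<close> by blast
next
  assume "\<exists>p'. p = m # p' \<and> tpath TE p' a y \<and> m \<notin> set p'"
  then obtain p' where pp: "p = m # p'" "tpath TE p' a y" "m \<notin> set p'" by blast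
  then obtain r where "p' = a # r" by (cases p') (auto simp: tpath_chain)
  then show "tpath (insert {m, a} TE) p m y" using pp chain_mono[of TE p' "insert {m,a} TE"]
    by (auto simp: tpath_chain)
qed

lemma tpath_single: "tpath TE p m m \<longleftrightarrow> p = [m]"
proof
  assume p: "tpath TE p m m"
  show "p = [m]"
  proof (cases "length p \<ge> 2")
    case True
    then obtain x y r where "p = x # y # r" by (cases p; cases "tl p") auto
    moreover have "last (y # r) \<in> set (y # r)" by (rule last_in_set) simp
    ultimately have "hd p \<noteq> last p" using p
      by (auto simp: tpath_chain)
    then show ?thesis using p by (auto simp: tpath_chain)
  next
    case False then show ?thesis using p by (cases p; cases "tl p") (auto simp: tpath_chain)
  qed
qed (auto simp: tpath_chain)

lemma tpath_mono: "tpath TE p x y \<Longrightarrow> TE \<subseteq> TE' \<Longrightarrow> tpath TE' p x y"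
  using chain_mono by (auto simp: tpath_chain)

lemma tree_ex1: "is_tree N TE \<Longrightarrow> x \<in> N \<Longrightarrow> y \<in> N \<Longrightarrow> \<exists>!p. tpath TE p x y"
  unfolding is_tree_def by simp

lemma tree_uniq: "is_tree N TE \<Longrightarrow> x \<in> N \<Longrightarrow> y \<in> N \<Longrightarrow> tpath TE p x y \<Longrightarrow> tpath TE q x y \<Longrightarrow> p = q"
  using tree_ex1[of N TE x y] by (metis (no_types, lifting) ex1E)

lemma tree_ex: "is_tree N TE \<Longrightarrow> x \<in> N \<Longrightarrow> y \<in> N \<Longrightarrow> \<exists>p. tpath TE p x y"
  using tree_ex1[of N TE x y] by (metis ex1E)

lemma tree_add_leaf_paths:
  assumes t: "is_tree N TE" and mN: "m \<notin> N" and aN: "a \<in> N"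
  and x: "x \<in> insert m N" and y: "y \<in> insert m N"
  shows "\<exists>!p. tpath (insert {m, a} TE) p x y"
proof -
  have mU: "m \<notin> \<Union>TE" using tree_Union[OF t] mN by blast
  have ma: "m \<noteq> a" using mN aN by blast
  let ?T = "insert {m, a} TE"
  have sub: "TE \<subseteq> ?T" by blast
  have start: "\<exists>!p. tpath ?T p m z" if z: "z \<in> N" for z
  proof -
    obtain p0 where p0: "tpath TE p0 a z" using tree_ex[OF t aN z] by blast
    have "m \<notin> set p0" using tpath_set[OF t p0 aN] mN by blast
    have zm: "z \<noteq> m" using z mN by blast
    show ?thesis
    proof (rule ex1I[of _ "m # p0"])
      show "tpath ?T (m # p0) m z" using tpath_new_start[OF mU ma zm] p0 \<open>m \<notin> set p0\<close> by blast
    next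
      fix p assume "tpath ?T p m z"
      then obtain p' where "p = m # p'" "tpath TE p' a z" using tpath_new_start[OF mU ma zm] by blast
      then show "p = m # p0" using tree_uniq[OF t aN z _ p0] by simp
    qed
  qed
  show ?thesis
  proof (cases "x = m")
    case xm: True
    show ?thesis
    proof (cases "y = m")
      case True
      then show ?thesis using xm tpath_single by (metis ex1I)
    next
      case False
      then show ?thesis using xm start y by blast
    qed
  next
    case xm: False
    then have xN: "x \<in> N" using x by blast
    show ?thesis
    proof (cases "y = m")
      case True
      obtain p0 where p0: "tpath ?T p0 m x" "\<And>p. tpath ?T p m x \<Longrightarrow> p = p0" using start[OF xN] by blast
      show ?thesis
      proof (rule ex1I[of _ "rev p0"])
        show "tpath ?T (rev p0) x y" using tpath_rev[OF p0(1)] True by simp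
      next
        fix p assume "tpath ?T p x y"
        then have "tpath ?T (rev p) m x" using tpath_rev True by fastforce
        then show "p = rev p0" using p0(2) by fastforce
      qed
    next
      case False
      then have yN: "y \<in> N" using y by blast
      have eq: "tpath ?T p x y \<longleftrightarrow> tpath TE p x y" for p
        using tpath_old[OF _ mU ma xm False] tpath_mono[OF _ sub] by blast
      show ?thesis unfolding eq using tree_ex1[OF t xN yN] .
    qed
  qed
qed

lemma tree_add_leaf:
  assumes t: "is_tree N TE" and mN: "m \<notin> N" and aN: "a \<in> N"
  shows "is_tree (insert m N) (insert {m, a} TE)"
proof -
  have "finite N" "\<forall>e\<in>TE. \<exists>a b. a \<in> N \<and> b \<in> N \<and> a \<noteq> b \<and> e = {a, b}"
    using t unfolding is_tree_def by auto
  moreover have "m \<noteq> a" using mN aN by blast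
  moreover have "\<forall>e\<in>insert {m, a} TE. \<exists>x y. x \<in> insert m N \<and> y \<in> insert m N \<and> x \<noteq> y \<and> e = {x, y}"
  proof
    fix e assume "e \<in> insert {m, a} TE"
    then show "\<exists>x y. x \<in> insert m N \<and> y \<in> insert m N \<and> x \<noteq> y \<and> e = {x, y}"
    proof
      assume "e = {m, a}" then show ?thesis using \<open>m \<noteq> a\<close> aN by blast
    next
      assume "e \<in> TE"
      then obtain x y where "x \<in> N" "y \<in> N" "x \<noteq> y" "e = {x, y}" using calculation(2) by blast
      then show ?thesis by blast
    qed
  qed
  ultimately show ?thesis unfolding is_tree_def
    using tree_add_leaf_paths[OF t mN aN] aN by auto
qed

lemma tree_single: "is_tree {0} {}"
  unfolding is_tree_def using tpath_single[where TE="{}" and m=0] by auto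

definition pathcond :: "('v \<times> 'v) set \<Rightarrow> nat set \<Rightarrow> nat set set \<Rightarrow> (nat \<Rightarrow> 'v set) \<Rightarrow> bool" where
  "pathcond A N TE bag \<longleftrightarrow> (\<forall>t\<in>N. \<forall>t1\<in>N. \<forall>t2\<in>N. on_path TE t t1 t2 \<longrightarrow>
        reachB A (bag t1) \<inter> reachB A (bag t2) \<subseteq> reachB A (bag t))"

lemma pathcond_single: "pathcond A {0} {} bag"
  unfolding pathcond_def on_path_def using tpath_single[where TE="{}" and m=0] by auto

lemma pathcond_add_leaf:
  assumes t: "is_tree N TE" and mN: "m \<notin> N" and aN: "a \<in> N" and pc: "pathcond A N TE bag"
  and leaf: "\<And>x. x \<in> N \<Longrightarrow> reachB A B \<inter> reachB A (bag x) \<subseteq> reachB A (bag a)"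
  shows "pathcond A (insert m N) (insert {m, a} TE) (bag(m := B))"
proof -
  have mU: "m \<notin> \<Union>TE" using tree_Union[OF t] mN by blast
  have ma: "m \<noteq> a" using mN aN by blast
  let ?T = "insert {m, a} TE"
  let ?b = "bag(m := B)"
  have K: "reachB A (?b m) \<inter> reachB A (?b t2) \<subseteq> reachB A (?b t)"
    if tt: "t \<in> insert m N" "t2 \<in> insert m N" "on_path ?T t m t2" for t t2
  proof (cases "t2 = m")
    case True
    then have "t = m" using tt(3) tpath_single unfolding on_path_def by fastforce
    then show ?thesis by blast
  next
    case False
    then have t2N: "t2 \<in> N" using tt by blast
    obtain p where p: "tpath ?T p m t2" "t \<in> set p" using tt(3) unfolding on_path_def by blast
    then obtain p' where p': "p = m # p'" "tpath TE p' a t2" "m \<notin> set p'"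
      using tpath_new_start[OF mU ma False] by blast
    show ?thesis
    proof (cases "t = m")
      case True then show ?thesis by blast
    next
      case tm: False
      then have "t \<in> set p'" using p p' by simp
      then have tN: "t \<in> N" using tpath_set[OF t p'(2) aN] by blast
      have "on_path TE t a t2" using p' \<open>t \<in> set p'\<close> unfolding on_path_def by blast
      then have "reachB A (bag a) \<inter> reachB A (bag t2) \<subseteq> reachB A (bag t)"
        using pc tN aN t2N unfolding pathcond_def by blast
      moreover have "reachB A B \<inter> reachB A (bag t2) \<subseteq> reachB A (bag a)" using leaf[OF t2N] .
      ultimately show ?thesis using tm False by auto
    qed
  qed
  show ?thesis unfolding pathcond_def
  proof (intro ballI impI)
    fix t t1 t2 assume tN: "t \<in> insert m N" and t1N: "t1 \<in> insert m N" and t2N: "t2 \<in> insert m N"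
      and op: "on_path ?T t t1 t2"
    show "reachB A (?b t1) \<inter> reachB A (?b t2) \<subseteq> reachB A (?b t)"
    proof (cases "t1 = m")
      case True then show ?thesis using K[OF tN t2N] op by simp
    next
      case t1m: False
      show ?thesis
      proof (cases "t2 = m")
        case True
        then show ?thesis using K[OF tN t1N] on_path_sym[OF op] by (simp add: Int_commute)
      next
        case t2m: False
        obtain p where p: "tpath ?T p t1 t2" "t \<in> set p" using op unfolding on_path_def by blast
        have p2: "tpath TE p t1 t2" using tpath_old[OF p(1) mU ma t1m t2m] .
        have t1N': "t1 \<in> N" "t2 \<in> N" using t1N t2N t1m t2m by auto
        have "t \<in> N" using tpath_set[OF t p2 t1N'(1)] p(2) by blast
        moreover have "on_path TE t t1 t2" using p2 p(2) unfolding on_path_def by blast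
        ultimately have "reachB A (bag t1) \<inter> reachB A (bag t2) \<subseteq> reachB A (bag t)"
          using pc t1N' unfolding pathcond_def by blast
        then show ?thesis using t1m t2m mN \<open>t \<in> N\<close> by auto
      qed
    qed
  qed
qed

lemma reach_source: "s \<in> sources V A \<Longrightarrow> (t, s) \<in> A\<^sup>* \<Longrightarrow> t = s"
  unfolding sources_def by (auto elim: rtranclE)

lemma reachB_source: "s \<in> sources V A \<Longrightarrow> s \<in> reachB A B \<Longrightarrow> s \<in> B"
  unfolding reachB_def reach_def using reach_source by fastforce

lemma reachB_single: "reachB A {x} = reach A x"
  unfolding reachB_def by simp

lemma decomp_claim:
  assumes PS: "P \<subseteq> sources V A" and QS: "Q \<subseteq> sources V A"
  and dom: "\<And>s. s \<in> sources V A - (P \<union> Q) \<Longrightarrow> reach A s - {s} \<subseteq> reachB A P \<or> reach A s - {s} \<subseteq> reachB A Q"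
  and cP: "card P \<le> w" and cQ: "card Q \<le> w" and w1: "sources V A - (P \<union> Q) \<noteq> {} \<Longrightarrow> 1 \<le> w"
  shows "distinct xs \<Longrightarrow> set xs \<subseteq> sources V A - (P \<union> Q) \<Longrightarrow>
    \<exists>TE bag. is_tree {..<length xs + 2} TE \<and> pathcond A {..<length xs + 2} TE bag \<and>
      bag 0 = P \<and> bag 1 = Q \<and> (\<forall>t<length xs + 2. bag t \<subseteq> P \<union> Q \<union> set xs \<and> card (bag t) \<le> w) \<and>
      (\<forall>s\<in>set xs. \<exists>t<length xs + 2. s \<in> bag t)"
proof (induction xs)
  case Nil
  let ?b = "(\<lambda>_::nat. P)(1 := Q)"
  have N: "{..<length [] + 2} = insert (1::nat) {0}" by auto
  have "is_tree (insert 1 {0}) (insert {1, 0} {})"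
    by (rule tree_add_leaf[OF tree_single]) auto
  moreover have "pathcond A (insert 1 {0}) (insert {1, 0} {}) ?b"
    by (rule pathcond_add_leaf[OF tree_single _ _ pathcond_single]) auto
  moreover have "\<forall>t<length [] + 2. ?b t \<subseteq> P \<union> Q \<union> set [] \<and> card (?b t) \<le> w"
    using cP cQ by auto
  moreover have "?b 0 = P" "?b 1 = Q" by auto
  ultimately have G: "is_tree (insert 1 {0}) (insert {1, 0} {}) \<and> pathcond A (insert 1 {0}) (insert {1, 0} {}) ?b \<and>
      ?b 0 = P \<and> ?b 1 = Q \<and> (\<forall>t<length [] + 2. ?b t \<subseteq> P \<union> Q \<union> set [] \<and> card (?b t) \<le> w) \<and>
      (\<forall>s\<in>set []. \<exists>t<length [] + 2. s \<in> ?b t)" by simp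
  show ?case unfolding N by (rule exI[where x="insert {1, 0} {}"], rule exI[where x="?b"], rule G)
next
  case (Cons x xs)
  then obtain TE bag where IH: "is_tree {..<length xs + 2} TE" "pathcond A {..<length xs + 2} TE bag"
      "bag 0 = P" "bag 1 = Q" "\<forall>t<length xs + 2. bag t \<subseteq> P \<union> Q \<union> set xs \<and> card (bag t) \<le> w"
      "\<forall>s\<in>set xs. \<exists>t<length xs + 2. s \<in> bag t"
    by auto
  define m where "m = length xs + 2"
  define a :: nat where "a = (if reach A x - {x} \<subseteq> reachB A P then 0 else 1)"
  have xS: "x \<in> sources V A - (P \<union> Q)" using Cons.prems by simp
  have xxs: "x \<notin> set xs" using Cons.prems by simp
  have da: "reach A x - {x} \<subseteq> reachB A (bag a)"
    using dom[OF xS] IH(3,4) unfolding a_def by auto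
  have aN: "a \<in> {..<length xs + 2}" unfolding a_def by auto
  have mN: "m \<notin> {..<length xs + 2}" unfolding m_def by auto
  have leaf: "reachB A {x} \<inter> reachB A (bag y) \<subseteq> reachB A (bag a)" if y: "y \<in> {..<length xs + 2}" for y
  proof
    fix z assume z: "z \<in> reachB A {x} \<inter> reachB A (bag y)"
    show "z \<in> reachB A (bag a)"
    proof (cases "z = x")
      case True
      then have "x \<in> bag y" using reachB_source[of x V A "bag y"] xS z by blast
      then show ?thesis using IH(5) y xS xxs by auto
    next
      case False
      have "z \<in> reach A x" using z reachB_single[of A x] by blast
      then show ?thesis using z da False by blast
    qed
  qed
  have N: "{..<length (x # xs) + 2} = insert m {..<length xs + 2}" unfolding m_def by auto
  have T: "is_tree (insert m {..<length xs + 2}) (insert {m, a} TE)"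
    by (rule tree_add_leaf[OF IH(1) mN aN])
  have PC: "pathcond A (insert m {..<length xs + 2}) (insert {m, a} TE) (bag(m := {x}))"
    by (rule pathcond_add_leaf[OF IH(1) mN aN IH(2) leaf])
  have w: "1 \<le> w" using w1 xS by blast
  have B: "\<forall>t<length (x # xs) + 2. (bag(m := {x})) t \<subseteq> P \<union> Q \<union> set (x # xs) \<and> card ((bag(m := {x})) t) \<le> w"
    using IH(5) w unfolding m_def by (auto simp: less_Suc_eq)
  have C: "\<forall>s\<in>set (x # xs). \<exists>t<length (x # xs) + 2. s \<in> (bag(m := {x})) t"
  proof
    fix s assume s: "s \<in> set (x # xs)"
    show "\<exists>t<length (x # xs) + 2. s \<in> (bag(m := {x})) t"
    proof (cases "s = x")
      case True then show ?thesis unfolding m_def by (intro exI[of _ m]) (auto simp: m_def)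
    next
      case False
      then have "s \<in> set xs" using s by simp
      then obtain t where "t < length xs + 2" "s \<in> bag t" using IH(6) by blast
      then show ?thesis by (intro exI[of _ t]) (auto simp: m_def)
    qed
  qed
  have "(bag(m := {x})) 0 = P" "(bag(m := {x})) 1 = Q" using IH(3,4) unfolding m_def by auto
  then have G: "is_tree {..<length (x # xs) + 2} (insert {m, a} TE) \<and> pathcond A {..<length (x # xs) + 2} (insert {m, a} TE) (bag(m := {x})) \<and>
      (bag(m := {x})) 0 = P \<and> (bag(m := {x})) 1 = Q \<and> (\<forall>t<length (x # xs) + 2. (bag(m := {x})) t \<subseteq> P \<union> Q \<union> set (x # xs) \<and> card ((bag(m := {x})) t) \<le> w) \<and>
      (\<forall>s\<in>set (x # xs). \<exists>t<length (x # xs) + 2. s \<in> (bag(m := {x})) t)"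
    unfolding N using T PC B C by blast
  show ?case by (rule exI[where x="insert {m, a} TE"], rule exI[where x="bag(m := {x})"], rule G)
qed

lemma decomp_exists:
  assumes fin: "finite (sources V A)" and PS: "P \<subseteq> sources V A" and QS: "Q \<subseteq> sources V A"
  and dom: "\<And>s. s \<in> sources V A - (P \<union> Q) \<Longrightarrow> reach A s - {s} \<subseteq> reachB A P \<or> reach A s - {s} \<subseteq> reachB A Q"
  and cP: "card P \<le> w" and cQ: "card Q \<le> w" and w1: "sources V A - (P \<union> Q) \<noteq> {} \<Longrightarrow> 1 \<le> w"
  shows "dtw_dag V A \<le> w"
proof -
  obtain xs where xs: "set xs = sources V A - (P \<union> Q)" "distinct xs"
    using finite_distinct_list[of "sources V A - (P \<union> Q)"] fin by blast
  obtain TE bag where D: "is_tree {..<length xs + 2} TE" "pathcond A {..<length xs + 2} TE bag"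
      "bag 0 = P" "bag 1 = Q" "\<forall>t<length xs + 2. bag t \<subseteq> P \<union> Q \<union> set xs \<and> card (bag t) \<le> w"
      "\<forall>s\<in>set xs. \<exists>t<length xs + 2. s \<in> bag t"
    using decomp_claim[OF PS QS dom cP cQ w1 xs(2)] xs(1) by auto
  let ?N = "{..<length xs + 2}"
  have "dag_tree_decomp V A ?N TE bag"
    unfolding dag_tree_decomp_def
  proof (intro conjI)
    show "is_tree ?N TE" by fact
    show "\<forall>t\<in>?N. bag t \<subseteq> sources V A"
    proof
      fix t assume "t \<in> ?N"
      then have "bag t \<subseteq> P \<union> Q \<union> set xs" using D(5) by simp
      then show "bag t \<subseteq> sources V A" using PS QS xs(1) by auto
    qed
    show "\<forall>s\<in>sources V A. \<exists>t\<in>?N. s \<in> bag t"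
    proof
      fix s assume s: "s \<in> sources V A"
      show "\<exists>t\<in>?N. s \<in> bag t"
      proof (cases "s \<in> P \<union> Q")
        case True
        have "(0::nat) \<in> ?N" "(1::nat) \<in> ?N" by auto
        then show ?thesis using D(3,4) True by blast
      next
        case False then show ?thesis using D(6) xs(1) s by auto
      qed
    qed
    show "\<forall>t\<in>?N. \<forall>t1\<in>?N. \<forall>t2\<in>?N. on_path TE t t1 t2 \<longrightarrow>
        reachB A (bag t1) \<inter> reachB A (bag t2) \<subseteq> reachB A (bag t)"
      using D(2) unfolding pathcond_def .
  qed
  moreover have "td_width ?N bag \<le> w"
    unfolding td_width_def using D(5) by (subst Max_le_iff) auto
  ultimately have "td_width ?N bag \<in> {td_width N bag | N TE bag. dag_tree_decomp V A N TE bag}" "td_width ?N bag \<le> w"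
    by blast+
  then have "Inf {td_width N bag | N TE bag. dag_tree_decomp V A N TE bag} \<le> td_width ?N bag"
    by (intro cInf_lower) auto
  then show ?thesis unfolding dtw_dag_def using \<open>td_width ?N bag \<le> w\<close> by linarith
qed



lemma half_aux1: "(u + 2 * m + 1) div 2 = m + (u + 1) div (2::nat)"
  by simp

lemma half_aux2: "a - a div 2 = (a + 1) div (2::nat)"
  by presburger

lemma half_le1: "a \<le> u \<Longrightarrow> m + a div 2 \<le> (u + 2 * m + 1) div (2::nat)"
  unfolding half_aux1 using div_le_mono[of a "u + 1" 2] by simp

lemma half_le2: "a \<le> u \<Longrightarrow> m + (a - a div 2) \<le> (u + 2 * m + 1) div (2::nat)"
  unfolding half_aux1 half_aux2 using div_le_mono[of "a + 1" "u + 1" 2] by simp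

lemma ceil_half: "(n + 1) div 2 \<le> nat (ceiling (real n / 2))"
proof -
  obtain k where k: "n = 2 * k \<or> n = 2 * k + 1" by (metis dvd_mult_div_cancel odd_two_times_div_two_succ)
  have "int ((n + 1) div 2) \<le> ceiling (real n / 2)"
    unfolding le_ceiling_iff using k by auto
  then show ?thesis by linarith
qed

lemma Sup_nat_le: "(\<And>x. x \<in> X \<Longrightarrow> x \<le> (w::nat)) \<Longrightarrow> Sup X \<le> w"
proof (cases "X = {}")
  case True then show ?thesis by (simp add: Sup_nat_def)
next
  case False
  assume "\<And>x. x \<in> X \<Longrightarrow> x \<le> w"
  then show ?thesis using cSup_least[OF False] by blast
qed

lemma reachB_mono: "B \<subseteq> B' \<Longrightarrow> reachB A B \<subseteq> reachB A B'"
  unfolding reachB_def by blast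

lemma reach_sub_reachB: "b \<in> B \<Longrightarrow> reach A b \<subseteq> reachB A B"
  unfolding reachB_def by blast

lemma reach_step: "(x, y) \<in> A \<Longrightarrow> reach A y \<subseteq> reach A x"
  unfolding reach_def by (auto intro: converse_rtrancl_into_rtrancl)

lemma reach_trans: "(x, y) \<in> A\<^sup>* \<Longrightarrow> reach A y \<subseteq> reach A x"
  unfolding reach_def by (auto intro: rtrancl_trans)

lemma spec_dtw:
  fixes V :: "'a set" and E F :: "'a set set" and A
  defines "V' \<equiv> fst (subdivide V E F)" and "E' \<equiv> snd (subdivide V E F)"
  assumes sg: "simple_graph V E" and FE: "F \<subseteq> E" and ao: "acyclic_orientation V' E' A"
  shows "dtw_dag V' A \<le> (card V + 1) div 2"
proof -
  have V'eq: "V' = Inl ` V \<union> Inr ` F" unfolding V'_def subdivide_def by simp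
  have E'eq: "E' = {{Inl u, Inl v} | u v. {u, v} \<in> E - F} \<union> {{Inl u, Inr e} | u e. e \<in> F \<and> u \<in> e}"
    unfolding E'_def subdivide_def by simp
  have AV: "A \<subseteq> V' \<times> V'" and AE: "\<And>u v. (u, v) \<in> A \<Longrightarrow> {u, v} \<in> E'"
    and EA: "\<And>u v. {u, v} \<in> E' \<Longrightarrow> (u, v) \<in> A \<or> (v, u) \<in> A" and acy: "acyclic A"
    using ao unfolding acyclic_orientation_def by auto
  have finV: "finite V" using sg unfolding simple_graph_def by simp
  have edge: "\<And>e. e \<in> E \<Longrightarrow> \<exists>u v. u \<in> V \<and> v \<in> V \<and> u \<noteq> v \<and> e = {u, v}"
    using sg unfolding simple_graph_def by simp
  have EV: "E \<subseteq> Pow V" using edge by blast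
  have finE: "finite E" using finite_subset[OF EV] finV by simp
  have finF: "finite F" using finite_subset[OF FE finE] .
  have finV': "finite V'" unfolding V'eq using finV finF by simp
  have finA: "finite A" using finite_subset[OF AV] finV' by simp
  define S where "S = sources V' A"
  have SV: "S \<subseteq> V'" unfolding S_def sources_def by blast
  have finS: "finite S" using finite_subset[OF SV finV'] .
  have wfA: "wf A" using finite_acyclic_wf[OF finA acy] .
  have reach_src: "x \<in> V' \<longrightarrow> (\<exists>s\<in>S. (s, x) \<in> A\<^sup>*)" for x
    using wfA
  proof (induction x rule: wf_induct_rule)
    case (less x)
    show ?case
    proof
      assume xV: "x \<in> V'"
      show "\<exists>s\<in>S. (s, x) \<in> A\<^sup>*"
      proof (cases "\<exists>y. (y, x) \<in> A")
        case True
        then obtain y where y: "(y, x) \<in> A" by blast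
        then have "y \<in> V'" using AV by blast
        then obtain s where "s \<in> S" "(s, y) \<in> A\<^sup>*" using less y by blast
        then show ?thesis using y by (meson rtrancl.rtrancl_into_rtrancl)
      next
        case False
        then have "x \<in> S" using xV unfolding S_def sources_def by blast
        then show ?thesis by blast
      qed
    qed
  qed
  have f4: "(Inr e, Inl u) \<in> A" if "Inr e \<in> S" "u \<in> e" for e u
  proof -
    have "e \<in> F" using that SV unfolding V'eq by auto
    then have "{Inl u, Inr e} \<in> E'" unfolding E'eq using that by blast
    then have "(Inl u, Inr e) \<in> A \<or> (Inr e, Inl u) \<in> A" using EA by blast
    moreover have "(Inl u, Inr e) \<notin> A" using that unfolding S_def sources_def by blast
    ultimately show ?thesis by blast
  qed
  have f5: "\<exists>u\<in>e. z = Inl u" if "(Inr e, z) \<in> A" for e z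
  proof -
    have "{Inr e, z} \<in> E'" using AE that by blast
    then show ?thesis unfolding E'eq by (auto simp: doubleton_eq_iff)
  qed
  have f6: "reach A (Inr e) - {Inr e} \<subseteq> (\<Union>u\<in>e. reach A (Inl u))" for e
  proof
    fix y assume "y \<in> reach A (Inr e) - {Inr e}"
    then have "(Inr e, y) \<in> A\<^sup>*" "y \<noteq> Inr e" unfolding reach_def by auto
    then obtain z where "(Inr e, z) \<in> A" "(z, y) \<in> A\<^sup>*" by (metis converse_rtranclE)
    then show "y \<in> (\<Union>u\<in>e. reach A (Inl u))" using f5 unfolding reach_def by blast
  qed
  define Ms where "Ms = {e \<in> F. Inr e \<in> S}"
  define Fam where "Fam = {M. M \<subseteq> Ms \<and> pairwise disjnt M}"
  have finMs: "finite Ms" unfolding Ms_def using finF by simp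
  have "Fam \<subseteq> Pow Ms" unfolding Fam_def by blast
  then have finFam: "finite Fam" using finMs finite_subset by blast
  have "{} \<in> Fam" unfolding Fam_def by simp
  then have ne: "card ` Fam \<noteq> {}" by blast
  have fi: "finite (card ` Fam)" using finFam by (rule finite_imageI)
  have "Max (card ` Fam) \<in> card ` Fam" using Max_in[OF fi ne] .
  then obtain M where MF: "M \<in> Fam" and Mmax: "Max (card ` Fam) = card M" by (rule imageE)
  have Mmax': "card M' \<le> card M" if "M' \<in> Fam" for M'
    using Max_ge[OF fi imageI[OF that, of card]] Mmax by simp
  have MMs: "M \<subseteq> Ms" and Mdisj: "pairwise disjnt M" using MF unfolding Fam_def by auto
  have finM: "finite M" using finite_subset[OF MMs finMs] .
  have maximal: "\<exists>e'\<in>M. e \<inter> e' \<noteq> {}" if "e \<in> Ms" "e \<notin> M" for e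
  proof (rule ccontr)
    assume "\<not> (\<exists>e'\<in>M. e \<inter> e' \<noteq> {})"
    then have "pairwise disjnt (insert e M)" using Mdisj
      by (auto simp: pairwise_insert disjnt_def)
    then have "insert e M \<in> Fam" using that MMs unfolding Fam_def by auto
    then have "card (insert e M) \<le> card M" using Mmax' by blast
    then show False using that finM by simp
  qed
  have MF': "M \<subseteq> F" using MMs unfolding Ms_def by blast
  have card2: "card e = 2" if eM: "e \<in> M" for e
  proof -
    obtain u v where "u \<noteq> v" "e = {u, v}" using edge[of e] eM MF' FE by blast
    then show ?thesis by simp
  qed
  have UMV: "\<Union>M \<subseteq> V" using MF' FE EV by blast
  have cardUM: "card (\<Union>M) = 2 * card M"
  proof -
    have "card (\<Union>M) = sum card M"
      by (rule card_Union_disjoint[OF Mdisj]) (use UMV finV in \<open>auto intro: finite_subset\<close>)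
    also have "\<dots> = sum (\<lambda>_. 2) M" using card2 by simp
    finally show ?thesis by simp
  qed
  define U where "U = V - \<Union>M"
  have cardV: "card V = card U + 2 * card M"
    unfolding U_def using card_Diff_subset[OF finite_subset[OF UMV finV] UMV] card_mono[OF finV UMV] cardUM
    by simp
  define c where "c v = (SOME s. s \<in> S \<and> (s, Inl v) \<in> A\<^sup>*)" for v
  have c: "c v \<in> S \<and> (c v, Inl v) \<in> A\<^sup>*" if "v \<in> V" for v
  proof -
    have "Inl v \<in> V'" unfolding V'eq using that by blast
    then have "\<exists>s. s \<in> S \<and> (s, Inl v) \<in> A\<^sup>*" using reach_src by blast
    then show ?thesis unfolding c_def by (rule someI_ex)
  qed
  define Aset where "Aset = c ` U"
  have finU: "finite U" unfolding U_def using finV by simp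
  have AsetS: "Aset \<subseteq> S" unfolding Aset_def U_def using c by blast
  have cardA: "card Aset \<le> card U" unfolding Aset_def using card_image_le[OF finU] .
  obtain A1 where A1: "A1 \<subseteq> Aset" "card A1 = card Aset div 2" "finite A1"
    using obtain_subset_with_card_n[of "card Aset div 2" Aset] by auto
  define A2 where "A2 = Aset - A1"
  have finAset: "finite Aset" unfolding Aset_def using finU by simp
  have cardA2: "card A2 = card Aset - card Aset div 2"
    unfolding A2_def using card_Diff_subset[OF A1(3) A1(1)] A1(2) by simp
  define P where "P = Inr ` M \<union> A1"
  define Q where "Q = Inr ` M \<union> A2"
  have MS: "Inr ` M \<subseteq> S" using MMs unfolding Ms_def by blast
  have PS: "P \<subseteq> sources V' A" unfolding P_def S_def[symmetric] using MS A1(1) AsetS by blast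
  have QS: "Q \<subseteq> sources V' A" unfolding Q_def A2_def S_def[symmetric] using MS AsetS by blast
  have cP: "card P \<le> (card V + 1) div 2"
  proof -
    have "card P \<le> card (Inr ` M :: ('a + 'a set) set) + card A1" unfolding P_def by (rule card_Un_le)
    also have "\<dots> \<le> card M + card Aset div 2" using card_image_le[OF finM, of Inr] A1(2) by simp
    finally have "card P \<le> card M + card Aset div 2" .
    then show ?thesis unfolding cardV using half_le1[OF cardA, of "card M"] by linarith
  qed
  have cQ: "card Q \<le> (card V + 1) div 2"
  proof -
    have "card Q \<le> card (Inr ` M :: ('a + 'a set) set) + card A2" unfolding Q_def by (rule card_Un_le)
    moreover have "card (Inr ` M :: ('a + 'a set) set) \<le> card M" by (rule card_image_le[OF finM])
    ultimately have "card Q \<le> card M + card A2" by linarith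
    then show ?thesis unfolding cardV cardA2 using half_le2[OF cardA, of "card M"] by linarith
  qed
  have H1: "reach A (Inl u) \<subseteq> reachB A (Inr ` M)" if uM: "u \<in> \<Union>M" for u
  proof -
    obtain e where "e \<in> M" "u \<in> e" using uM by blast
    then have "(Inr e, Inl u) \<in> A" using f4 MS by blast
    then have "reach A (Inl u) \<subseteq> reach A (Inr e)" by (rule reach_step)
    also have "\<dots> \<subseteq> reachB A (Inr ` M)" using \<open>e \<in> M\<close> by (intro reach_sub_reachB) blast
    finally show ?thesis .
  qed
  have H2: "reach A (Inl u) \<subseteq> reach A (c u)" "c u \<in> Aset" if "u \<in> U" for u
  proof -
    have "u \<in> V" using that unfolding U_def by blast
    then have "(c u, Inl u) \<in> A\<^sup>*" using c by auto
    then show "reach A (Inl u) \<subseteq> reach A (c u)" by (rule reach_trans)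
    show "c u \<in> Aset" unfolding Aset_def using that by blast
  qed
  have G: "reach A (Inr e) - {Inr e} \<subseteq> reachB A (Inr ` M \<union> B')"
    if hyp: "\<And>u. u \<in> e \<Longrightarrow> u \<in> \<Union>M \<or> (u \<in> U \<and> c u \<in> B')" for e B'
  proof -
    have "reach A (Inl u) \<subseteq> reachB A (Inr ` M \<union> B')" if u: "u \<in> e" for u
    proof (cases "u \<in> \<Union>M")
      case True
      then show ?thesis using H1 reachB_mono[of "Inr ` M" "Inr ` M \<union> B'" A] by blast
    next
      case False
      then have "u \<in> U" "c u \<in> B'" using hyp u by auto
      then show ?thesis using H2(1) reach_sub_reachB[of "c u" "Inr ` M \<union> B'" A] by blast
    qed
    then show ?thesis using f6[of e] by blast
  qed
  have dom: "reach A s - {s} \<subseteq> reachB A P \<or> reach A s - {s} \<subseteq> reachB A Q"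
    if s: "s \<in> sources V' A - (P \<union> Q)" for s
  proof -
    have sS: "s \<in> S" using s unfolding S_def by blast
    then have "s \<in> V'" using SV by blast
    then consider (L) v where "v \<in> V" "s = Inl v" | (R) e where "e \<in> F" "s = Inr e" unfolding V'eq by blast
    then show ?thesis
    proof cases
      case L
      have "v \<notin> \<Union>M"
      proof
        assume "v \<in> \<Union>M"
        then obtain e where "e \<in> M" "v \<in> e" by blast
        then have "(Inr e, Inl v) \<in> A" using f4 MS by blast
        then show False using sS L unfolding S_def sources_def by blast
      qed
      then have "v \<in> U" unfolding U_def using L by blast
      then have "c v = s" using c[of v] L sS reach_source[of s V' A "c v"] unfolding S_def by auto
      then have "s \<in> Aset" using \<open>v \<in> U\<close> unfolding Aset_def by blast
      then have "s \<in> P \<union> Q" unfolding P_def Q_def A2_def by blast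
      then show ?thesis using s by blast
    next
      case R
      have "e \<in> Ms" using R sS unfolding Ms_def by blast
      moreover have "e \<notin> M" using R s unfolding P_def by blast
      ultimately obtain e' where "e' \<in> M" "e \<inter> e' \<noteq> {}" using maximal by blast
      obtain x y where xy: "x \<in> V" "y \<in> V" "x \<noteq> y" "e = {x, y}" using edge[of e] R FE by blast
      have xyM: "x \<in> \<Union>M \<or> y \<in> \<Union>M" using \<open>e' \<in> M\<close> \<open>e \<inter> e' \<noteq> {}\<close> xy(4) by blast
      have inU: "u \<in> U" if "u \<in> e" "u \<notin> \<Union>M" for u using that xy unfolding U_def by blast
      have AA: "c u \<in> A1 \<or> c u \<in> A2" if "u \<in> U" for u using H2(2)[OF that] unfolding A2_def by blast
      have "\<exists>B'. (B' = A1 \<or> B' = A2) \<and> (\<forall>u\<in>e. u \<in> \<Union>M \<or> (u \<in> U \<and> c u \<in> B'))"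
      proof (cases "x \<in> \<Union>M")
        case True
        show ?thesis
        proof (cases "y \<in> \<Union>M")
          case True then show ?thesis using \<open>x \<in> \<Union>M\<close> xy(4) by blast
        next
          case False
          then have "y \<in> U" using inU xy(4) by blast
          then show ?thesis using AA[of y] \<open>x \<in> \<Union>M\<close> xy(4) by blast
        qed
      next
        case False
        then have "y \<in> \<Union>M" using xyM by blast
        have "x \<in> U" using inU xy(4) False by blast
        then show ?thesis using AA[of x] \<open>y \<in> \<Union>M\<close> xy(4) by blast
      qed
      then obtain B' where B': "B' = A1 \<or> B' = A2" "\<And>u. u \<in> e \<Longrightarrow> u \<in> \<Union>M \<or> (u \<in> U \<and> c u \<in> B')" by blast
      have "reach A s - {s} \<subseteq> reachB A (Inr ` M \<union> B')" using G[OF B'(2)] R by simp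
      then show ?thesis using B'(1) unfolding P_def Q_def by blast
    qed
  qed
  have w1: "1 \<le> (card V + 1) div 2" if "sources V' A - (P \<union> Q) \<noteq> {}"
  proof -
    obtain s where "s \<in> V'" using \<open>sources V' A - (P \<union> Q) \<noteq> {}\<close> unfolding sources_def by blast
    have "V \<noteq> {}"
    proof
      assume "V = {}"
      then have "F = {}" using FE EV edge by fastforce
      then show False using \<open>s \<in> V'\<close> \<open>V = {}\<close> unfolding V'eq by blast
    qed
    then have "card V \<ge> 1" using finV by (simp add: Suc_le_eq card_gt_0_iff)
    then show ?thesis by simp
  qed
  have finS': "finite (sources V' A)" using finS unfolding S_def .
  show ?thesis by (rule decomp_exists[OF finS' PS QS dom cP cQ w1])
qed

theorem mainTheorem15:
  fixes V :: "'a set" and E :: "'a set set" and F :: "'a set set" and n :: nat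
  assumes "simple_graph V E" and "card V = n" and "F \<subseteq> E"
  shows "dtw_graph (fst (subdivide V E F)) (snd (subdivide V E F)) \<le> nat (ceiling (real n / 2))"
proof -
  have "dtw_graph (fst (subdivide V E F)) (snd (subdivide V E F)) \<le> (card V + 1) div 2"
    unfolding dtw_graph_def
    by (rule Sup_nat_le) (use spec_dtw[OF assms(1) assms(3)] in blast)
  then show ?thesis using ceil_half[of n] assms(2) by linarith
qed

end
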